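(* Assume Assumption 1. Assume there is a constant $L>0$ such that for every $T^Y_0\in\mathbb{T}^Y_0$ and all $(x_1,y_1),(x_2,y_2)\in\mathcal{X}_T\times\mathcal{Y}_S$, $$\|T^Y_0(x_1,y_1)-T^Y_0(x_2,y_2)\|_{\mathcal{Y}_T}\le L\big(\|x_1-x_2\|_{\mathcal{X}_T}+\|y_1-y_2\|_{\mathcal{Y}_S}\big).$$ Assume also there are $L'>0$ and $p\ge1$ such that the output transport risk satisfies $$|\mathcal{E}^O(h_1)-\mathcal{E}^O(h_2)|\le L'\,\mathcal{W}_p\big(h_1\#Law(X_T),h_2\#Law(X_T)\big)^p$$ for all intermediate models $h_1,h_2$ (arising from any pretrained models in $A_S$). Then for every fixed $\mu\in\mathcal{P}(\mathcal{X}_S)$, the map $f\mapsto\mathcal{C}(\mu,f)$ is continuous on $(A_S,d_M)$.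
   Context: Transfer learning framework. A source task $S$ consists of an input space $\mathcal{X}_S$ and output space $\mathcal{Y}_S$ (finite-dimensional normed spaces), a random pair $(X_S,Y_S)$, a set $A_S$ of admissible models $f:\mathcal{X}_S\to\mathcal{Y}_S$ and a pretrained model $f_S^*\in A_S$. A target task $T$ has analogous $\mathcal{X}_T,\mathcal{Y}_T,(X_T,Y_T),A_T$ and optimal target model $f_T^*$. Fixed sets $\mathbb{T}^X_0$ of maps $\mathcal{X}_T\to\mathcal{X}_S$ and $\mathbb{T}^Y_0$ of maps $\mathcal{X}_T\times\mathcal{Y}_S\to\mathcal{Y}_T$ are given. For $(T^X_0,T^Y_0)$ the intermediate model is $f_{ST}(x)=T^Y_0(x,f_S^*(T^X_0(x)))$; $\mathbb{P}_T=Law(f_T^*(X_T))$, $\mathbb{P}_{ST}=Law(f_{ST}(X_T))$. An output transport risk is $\mathcal{E}^O:A_T\to\mathbb{R}$ with $\mathcal{E}^O\ge0$ and $\mathcal{E}^O(f_{ST})=0$ iff $\mathbb{P}_{ST}=\mathbb{P}_T$. An input transport risk $\mathcal{E}^I$ satisfies $\mathcal{E}^I(T^X_0)\ge0$, with equality iff $T^X_0\#Law(X_T)=Law(X_S)$. The model-specific transfer risk is $\mathcal{C}(S,T\mid f_{ST})=C(\mathcal{E}^O(f_{ST}),\mathcal{E}^I(T^X_0))$, with $C:\mathbb{R}^2\to\mathbb{R}$, $C(0,0)=0$, $C\ge0$ on relevant values, non-decreasing in each argument, and $|C(a,b)-C(a',b')|\le L_C(|a-a'|+|b-b'|)$ for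 some $L_C>0$. The transfer risk is $\mathcal{C}(S,T)=\inf_{(T^X_0,T^Y_0)\in\mathbb{T}^X_0\times\mathbb{T}^Y_0}\mathcal{C}(S,T\mid f_{ST})$. With target and transport sets fixed, a source task is $S=(\mu,f)\in\mathcal{P}(\mathcal{X}_S)\times A_S$ ($\mu=Law(X_S)$, $f=f_S^*$) and $\mathcal{C}(\mu,f):=\mathcal{C}(S,T)$. Assumption 1: $D$ is a metric on $\mathcal{P}(\mathcal{X}_S)$ and $\mathcal{E}^I(T^X_0)=D(T^X_0\#Law(X_T),\mu)$. For a fixed constant $M>0$, $d_M(f_1,f_2):=\min\{M,\sup_{x\in\mathcal{X}_S}\|f_1(x)-f_2(x)\|_{\mathcal{Y}_S}\}$ on $A_S$. $\mathcal{W}_p$ is the $p$-Wasserstein distance on probability measures on $\mathcal{Y}_T$ with finite $p$-th moment: $\mathcal{W}_p(\nu_1,\nu_2)^p=\inf_{\gamma\in\Pi(\nu_1,\nu_2)}\int\|x-y\|^p_{\mathcal{Y}_T}\,d\gamma(x,y)$. *)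

theory Defs
  imports "HOL-Analysis.Analysis" "HOL-Probability.Probability"
begin

definition fin_dim_space :: "'a::real_normed_vector itself \<Rightarrow> bool" where
  "fin_dim_space _ \<longleftrightarrow> (\<exists>B::'a set. finite B \<and> span B = UNIV)"

definition prob_measures :: "'a::topological_space measure set" where
  "prob_measures = {m. prob_space m \<and> sets m = sets (borel :: 'a measure)}"

definition couplings :: "'a::real_normed_vector measure \<Rightarrow> 'a measure \<Rightarrow> ('a \<times> 'a) measure set" where
  "couplings \<nu>1 \<nu>2 = {\<gamma>. prob_space \<gamma> \<and> sets \<gamma> = sets (borel :: ('a \<times> 'a) measure)
      \<and> distr \<gamma> borel fst = \<nu>1 \<and> distr \<gamma> borel snd = \<nu>2}"

definition wasserstein_pow :: "real \<Rightarrow> 'a::real_normed_vector measure \<Rightarrow> 'a measure \<Rightarrow> ennreal" where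
  "wasserstein_pow p \<nu>1 \<nu>2 =
     (INF \<gamma>\<in>couplings \<nu>1 \<nu>2. \<integral>\<^sup>+ z. ennreal (norm (fst z - snd z) powr p) \<partial>\<gamma>)"

definition d_M :: "real \<Rightarrow> ('a \<Rightarrow> 'b::real_normed_vector) \<Rightarrow> ('a \<Rightarrow> 'b) \<Rightarrow> real" where
  "d_M M f1 f2 = enn2real (min (ennreal M) (SUP x. ennreal (norm (f1 x - f2 x))))"

definition intermediate :: "('xt \<Rightarrow> 'xs) \<Rightarrow> ('xt \<times> 'ys \<Rightarrow> 'yt) \<Rightarrow> ('xs \<Rightarrow> 'ys) \<Rightarrow> 'xt \<Rightarrow> 'yt" where
  "intermediate TX TY f = (\<lambda>x. TY (x, f (TX x)))"

text \<open>Transfer risk C(mu,f) = inf over (T^X_0,T^Y_0) of C(E^O(f_ST), E^I(T^X_0)),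
  with E^I(T^X_0) = D(T^X_0 # Law(X_T), mu) (Assumption 1).\<close>
definition transfer_risk ::
  "(real \<Rightarrow> real \<Rightarrow> real) \<Rightarrow> (('xt \<Rightarrow> 'yt) \<Rightarrow> real) \<Rightarrow> ('xs::topological_space measure \<Rightarrow> 'xs measure \<Rightarrow> real)
   \<Rightarrow> 'xt::topological_space measure \<Rightarrow> ('xt \<Rightarrow> 'xs) set \<Rightarrow> ('xt \<times> 'ys \<Rightarrow> 'yt) set
   \<Rightarrow> 'xs measure \<Rightarrow> ('xs \<Rightarrow> 'ys) \<Rightarrow> real" where
  "transfer_risk C EO D \<nu>T TXs TYs \<mu> f =
     (INF tt\<in>TXs \<times> TYs. C (EO (intermediate (fst tt) (snd tt) f)) (D (distr \<nu>T borel (fst tt)) \<mu>))"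

end

theory Submission imports Defs begin

lemma fd_separable:
  assumes "fin_dim_space TYPE('a::real_normed_vector)"
  shows "\<exists>D::'a set. countable D \<and> (\<forall>x e. e > 0 \<longrightarrow> (\<exists>d\<in>D. dist d x < e))"
proof -
  obtain B :: "'a set" where B: "finite B" "span B = UNIV"
    using assms unfolding fin_dim_space_def by blast
  define D where "D = (\<lambda>q. \<Sum>v\<in>B. real_of_rat (q v) *\<^sub>R v) ` (Pi\<^sub>E B (\<lambda>_. UNIV))"
  have "countable (Pi\<^sub>E B (\<lambda>_. UNIV :: rat set))"
    by (rule countable_PiE[OF B(1)]) auto
  then have "countable D" unfolding D_def by (rule countable_image)
  moreover have "\<exists>d\<in>D. dist d x < e" if e: "e > 0" for x :: 'a and e
  proof -
    have "x \<in> range (\<lambda>u. \<Sum>v\<in>B. u v *\<^sub>R v)"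
      using B span_finite[OF B(1)] by simp
    then obtain u where u: "x = (\<Sum>v\<in>B. u v *\<^sub>R v)" by blast
    define S where "S = (\<Sum>v\<in>B. norm v)"
    have S0: "S \<ge> 0" unfolding S_def by (simp add: sum_nonneg)
    define \<eta> where "\<eta> = e / (1 + S)"
    have eta: "\<eta> > 0" unfolding \<eta>_def using e S0 by simp
    have "\<forall>v. \<exists>r::rat. \<bar>u v - real_of_rat r\<bar> < \<eta>"
    proof
      fix v
      obtain r where "r \<in> \<rat>" "u v - \<eta> < r" "r < u v + \<eta>"
        using Rats_dense_in_real[of "u v - \<eta>" "u v + \<eta>"] eta by auto
      moreover from \<open>r \<in> \<rat>\<close> obtain q where "r = real_of_rat q" by (auto elim: Rats_cases)
      ultimately show "\<exists>r::rat. \<bar>u v - real_of_rat r\<bar> < \<eta>"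
        by (intro exI[of _ q]) auto
    qed
    then obtain q0 where q0: "\<And>v. \<bar>u v - real_of_rat (q0 v)\<bar> < \<eta>" by metis
    define q where "q = restrict q0 B"
    have qin: "q \<in> Pi\<^sub>E B (\<lambda>_. UNIV)" unfolding q_def by auto
    let ?d = "\<Sum>v\<in>B. real_of_rat (q v) *\<^sub>R v"
    have "?d \<in> D" unfolding D_def using qin by blast
    moreover have "dist ?d x < e"
    proof -
      have "dist ?d x = norm (\<Sum>v\<in>B. (real_of_rat (q v) - u v) *\<^sub>R v)"
        unfolding u dist_norm by (simp add: sum_subtractf[symmetric] scaleR_diff_left)
      also have "\<dots> \<le> (\<Sum>v\<in>B. \<eta> * norm v)"
      proof (rule sum_norm_le)
        fix v assume "v \<in> B"
        then have "\<bar>real_of_rat (q v) - u v\<bar> \<le> \<eta>" using q0[of v] unfolding q_def by simp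
        then show "norm ((real_of_rat (q v) - u v) *\<^sub>R v) \<le> \<eta> * norm v"
          by (simp add: mult_right_mono)
      qed
      also have "\<dots> = \<eta> * S" unfolding S_def by (simp add: sum_distrib_left)
      also have "\<dots> < e" unfolding \<eta>_def using e S0
        by (simp add: divide_less_eq)
      finally show ?thesis .
    qed
    ultimately show ?thesis by blast
  qed
  ultimately show ?thesis by blast
qed

lemma fd_pair_measurable:
  assumes "fin_dim_space TYPE('a::real_normed_vector)" "fin_dim_space TYPE('b::real_normed_vector)"
    and u: "u \<in> borel_measurable M" and v: "v \<in> borel_measurable M"
  shows "(\<lambda>x. (u x :: 'a, v x :: 'b)) \<in> borel_measurable M"
proof (rule borel_measurableI)
  obtain D1 :: "'a set" where D1: "countable D1" "\<And>x e. e > 0 \<Longrightarrow> \<exists>d\<in>D1. dist d x < e"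
    using fd_separable[OF assms(1)] by blast
  obtain D2 :: "'b set" where D2: "countable D2" "\<And>x e. e > 0 \<Longrightarrow> \<exists>d\<in>D2. dist d x < e"
    using fd_separable[OF assms(2)] by blast
  fix U :: "('a \<times> 'b) set" assume U: "open U"
  define I where "I = {(d1, d2, r). d1 \<in> D1 \<and> d2 \<in> D2 \<and> r \<in> \<rat> \<and> ball d1 r \<times> ball d2 r \<subseteq> U}"
  have cI: "countable I"
    by (rule countable_subset[of _ "D1 \<times> D2 \<times> \<rat>"]) (auto simp: I_def D1 D2 countable_rat)
  have Ueq: "U = (\<Union>(d1, d2, r)\<in>I. ball d1 r \<times> ball d2 r)"
  proof
    show "(\<Union>(d1, d2, r)\<in>I. ball d1 r \<times> ball d2 r) \<subseteq> U" unfolding I_def by auto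
    show "U \<subseteq> (\<Union>(d1, d2, r)\<in>I. ball d1 r \<times> ball d2 r)"
    proof
      fix z assume "z \<in> U"
      obtain y1 y2 where z: "z = (y1, y2)" by (cases z)
      obtain e where e: "e > 0" "ball z e \<subseteq> U" using U \<open>z \<in> U\<close> open_contains_ball by blast
      obtain d1 where d1: "d1 \<in> D1" "dist d1 y1 < e/8" using D1(2)[of "e/8" y1] e by auto
      obtain d2 where d2: "d2 \<in> D2" "dist d2 y2 < e/8" using D2(2)[of "e/8" y2] e by auto
      obtain r where r: "r \<in> \<rat>" "e/8 < r" "r < e/4" using Rats_dense_in_real[of "e/8" "e/4"] e by auto
      have sub: "ball d1 r \<times> ball d2 r \<subseteq> U"
      proof
        fix w assume w: "w \<in> ball d1 r \<times> ball d2 r"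
        obtain w1 w2 where ww: "w = (w1, w2)" by (cases w)
        have a: "dist w1 y1 < e/2" using w d1 r dist_triangle[of w1 y1 d1] unfolding ww
          by (auto simp: dist_commute)
        have b: "dist w2 y2 < e/2" using w d2 r dist_triangle[of w2 y2 d2] unfolding ww
          by (auto simp: dist_commute)
        have "dist w z \<le> dist w1 y1 + dist w2 y2"
          unfolding ww z dist_Pair_Pair by (rule sqrt_sum_squares_le_sum) auto
        with a b have "dist z w < e" by (simp add: dist_commute)
        then show "w \<in> U" using e(2) by auto
      qed
      have "z \<in> ball d1 r \<times> ball d2 r" using z d1 d2 r by (auto simp: dist_commute)
      then show "z \<in> (\<Union>(d1, d2, r)\<in>I. ball d1 r \<times> ball d2 r)"
        using sub d1 d2 r unfolding I_def by blast
    qed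
  qed
  have "(\<lambda>x. (u x, v x)) -` U \<inter> space M =
        (\<Union>(d1, d2, r)\<in>I. (u -` ball d1 r \<inter> space M) \<inter> (v -` ball d2 r \<inter> space M))"
    by (subst Ueq) auto
  also have "\<dots> \<in> sets M"
  proof (rule sets.countable_UN''[OF cI])
    fix t assume "t \<in> I"
    obtain d1 d2 r where t: "t = (d1, d2, r)" by (cases t)
    have "u -` ball d1 r \<inter> space M \<in> sets M" using measurable_sets[OF u borel_open[OF open_ball]] by simp
    moreover have "v -` ball d2 r \<inter> space M \<in> sets M" using measurable_sets[OF v borel_open[OF open_ball]] by simp
    ultimately show "(case t of (d1, d2, r) \<Rightarrow> (u -` ball d1 r \<inter> space M) \<inter> (v -` ball d2 r \<inter> space M)) \<in> sets M"
      unfolding t by auto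
  qed
  finally show "(\<lambda>x. (u x, v x)) -` U \<inter> space M \<in> sets M" .
qed

lemma INF_close:
  fixes F G :: "'t \<Rightarrow> real"
  assumes "\<forall>t\<in>S. F t \<ge> 0" "\<forall>t\<in>S. G t \<ge> 0" "\<forall>t\<in>S. \<bar>F t - G t\<bar> \<le> c" "c \<ge> 0"
  shows "\<bar>(INF t\<in>S. F t) - (INF t\<in>S. G t)\<bar> \<le> c"
proof (cases "S = {}")
  case True
  then show ?thesis using assms by simp
next
  case False
  then obtain t0 where "t0 \<in> S" by blast
  then have c: "c \<ge> 0" using assms(3) by force
  have bF: "bdd_below (F ` S)" using assms(1) by (auto intro: bdd_belowI2)
  have bG: "bdd_below (G ` S)" using assms(2) by (auto intro: bdd_belowI2)
  have 1: "(INF t\<in>S. G t) - c \<le> (INF t\<in>S. F t)"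
  proof -
    have "(INF t\<in>S. G t) - c \<le> F t" if "t \<in> S" for t
      using cINF_lower[OF bG that] assms(3) that by force
    then have "(INF t\<in>S. G t) - c \<le> (INF t\<in>S. F t)" by (intro cINF_greatest False) 
    then show ?thesis .
  qed
  have 2: "(INF t\<in>S. F t) - c \<le> (INF t\<in>S. G t)"
  proof -
    have "(INF t\<in>S. F t) - c \<le> G t" if "t \<in> S" for t
      using cINF_lower[OF bF that] assms(3) that by force
    then show ?thesis by (intro cINF_greatest False)
  qed
  from 1 2 show ?thesis by linarith
qed

lemma W_bound:
  fixes h1 h2 :: "'x::topological_space \<Rightarrow> 'y::real_normed_vector"
  assumes fd: "fin_dim_space TYPE('y)"
    and N: "prob_space N" "sets N = sets (borel :: 'x measure)"
    and h: "h1 \<in> borel_measurable borel" "h2 \<in> borel_measurable borel"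
    and K: "\<And>x. norm (h1 x - h2 x) \<le> K" "K \<ge> 0" and p: "p \<ge> 0"
  shows "wasserstein_pow p (distr N borel h1) (distr N borel h2) \<le> ennreal (K powr p)"
proof -
  have hN: "h1 \<in> borel_measurable N" "h2 \<in> borel_measurable N"
    using h measurable_cong_sets[OF N(2) refl] by auto
  have phi: "(\<lambda>x. (h1 x, h2 x)) \<in> borel_measurable N"
    by (rule fd_pair_measurable[OF fd fd hN])
  define \<gamma> where "\<gamma> = distr N borel (\<lambda>x. (h1 x, h2 x))"
  have fstm: "(fst :: 'y \<times> 'y \<Rightarrow> 'y) \<in> borel_measurable borel"
    by (intro borel_measurable_continuous_onI continuous_intros)
  have sndm: "(snd :: 'y \<times> 'y \<Rightarrow> 'y) \<in> borel_measurable borel"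
    by (intro borel_measurable_continuous_onI continuous_intros)
  have "\<gamma> \<in> couplings (distr N borel h1) (distr N borel h2)"
    unfolding couplings_def \<gamma>_def
  proof (intro CollectI conjI)
    show "prob_space (distr N borel (\<lambda>x. (h1 x, h2 x)))"
      by (rule prob_space.prob_space_distr[OF N(1) phi])
    show "sets (distr N borel (\<lambda>x. (h1 x, h2 x))) = sets borel" by simp
    show "distr (distr N borel (\<lambda>x. (h1 x, h2 x))) borel fst = distr N borel h1"
      by (subst distr_distr[OF fstm phi]) (simp add: comp_def)
    show "distr (distr N borel (\<lambda>x. (h1 x, h2 x))) borel snd = distr N borel h2"
      by (subst distr_distr[OF sndm phi]) (simp add: comp_def)
  qed
  then have "wasserstein_pow p (distr N borel h1) (distr N borel h2)
      \<le> \<integral>\<^sup>+ z. ennreal (norm (fst z - snd z) powr p) \<partial>\<gamma>"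
    unfolding wasserstein_pow_def by (rule INF_lower)
  also have "\<dots> = \<integral>\<^sup>+ x. ennreal (norm (h1 x - h2 x) powr p) \<partial>N"
  proof -
    have g: "(\<lambda>z::'y \<times> 'y. norm (fst z - snd z)) \<in> borel_measurable borel"
      by (intro borel_measurable_continuous_onI continuous_intros)
    have r: "(\<lambda>r::real. ennreal (r powr p)) \<in> borel_measurable borel"
      by (rule measurable_compose[OF _ measurable_ennreal]) (intro powr_real_measurable measurable_ident_sets measurable_const; simp)
    have "(\<lambda>z::'y \<times> 'y. ennreal (norm (fst z - snd z) powr p)) \<in> borel_measurable borel"
      using measurable_comp[OF g r] by (simp add: comp_def)
    then have "(\<lambda>z::'y \<times> 'y. ennreal (norm (fst z - snd z) powr p)) \<in> borel_measurable \<gamma>"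
      unfolding \<gamma>_def by (subst measurable_cong_sets[OF sets_distr refl])
    then show ?thesis unfolding \<gamma>_def by (subst nn_integral_distr[OF phi]) (auto simp: \<gamma>_def)
  qed
  also have "\<dots> \<le> \<integral>\<^sup>+ x. ennreal (K powr p) \<partial>N"
    apply (rule nn_integral_mono) apply (rule ennreal_leI) apply (rule powr_mono2) using p K by auto
  also have "\<dots> = ennreal (K powr p)"
    using prob_space.emeasure_space_1[OF N(1)] by simp
  finally show ?thesis .
qed

lemma dM_bound:
  assumes "d_M M f g < \<delta>" "\<delta> \<le> M"
  shows "norm (f x - g x) \<le> d_M M f g"
proof -
  define S where "S = (SUP x. ennreal (norm (f x - g x)))"
  have M0: "M > 0" using assms enn2real_nonneg[of "min (ennreal M) S"] unfolding d_M_def S_def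
    by linarith
  have SM: "S < ennreal M"
  proof (rule ccontr)
    assume "\<not> S < ennreal M"
    then have "min (ennreal M) S = ennreal M" by (simp add: min_def not_less)
    then have "d_M M f g = M" unfolding d_M_def S_def using M0 by simp
    then show False using assms by simp
  qed
  then have mS: "min (ennreal M) S = S" by simp
  have Stop: "S < top" using SM by (simp add: order_less_le_trans)
  have dS: "ennreal (d_M M f g) = S" unfolding d_M_def S_def[symmetric] mS
    using Stop by (simp add: ennreal_enn2real_if)
  have "ennreal (norm (f x - g x)) \<le> S" unfolding S_def by (rule SUP_upper) simp
  then have "ennreal (norm (f x - g x)) \<le> ennreal (d_M M f g)" using dS by simp
  then show ?thesis by (simp add: d_M_def ennreal_le_iff enn2real_nonneg)
qed

theorem mainTheorem3:
  fixes \<nu>T :: "'xt::real_normed_vector measure"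
    and AS :: "('xs::real_normed_vector \<Rightarrow> 'ys::real_normed_vector) set"
    and AT :: "('xt \<Rightarrow> 'yt::real_normed_vector) set"
    and fT :: "'xt \<Rightarrow> 'yt"
    and TXs :: "('xt \<Rightarrow> 'xs) set" and TYs :: "('xt \<times> 'ys \<Rightarrow> 'yt) set"
    and EO :: "('xt \<Rightarrow> 'yt) \<Rightarrow> real"
    and D :: "'xs measure \<Rightarrow> 'xs measure \<Rightarrow> real"
    and C :: "real \<Rightarrow> real \<Rightarrow> real"
    and L_C L L' p M :: real
    and \<mu> :: "'xs measure"
  assumes fd: "fin_dim_space TYPE('xt)" "fin_dim_space TYPE('xs)"
              "fin_dim_space TYPE('ys)" "fin_dim_space TYPE('yt)"
    and \<nu>T: "\<nu>T \<in> prob_measures"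
    and fT: "fT \<in> AT" "fT \<in> borel_measurable borel"
    and AS_meas: "\<forall>f\<in>AS. f \<in> borel_measurable borel"
    and TX_meas: "\<forall>tx\<in>TXs. tx \<in> borel_measurable borel"
    and TY_meas: "\<forall>ty\<in>TYs. ty \<in> borel_measurable borel"
    and inter_AT: "\<forall>tx\<in>TXs. \<forall>ty\<in>TYs. \<forall>f\<in>AS. intermediate tx ty f \<in> AT"
    and EO_nonneg: "\<forall>h\<in>AT. EO h \<ge> 0"
    and EO_zero: "\<forall>tx\<in>TXs. \<forall>ty\<in>TYs. \<forall>f\<in>AS.
        EO (intermediate tx ty f) = 0 \<longleftrightarrow> distr \<nu>T borel (intermediate tx ty f) = distr \<nu>T borel fT"
    and D_metric: "\<forall>a\<in>prob_measures. \<forall>b\<in>prob_measures. D a b = 0 \<longleftrightarrow> a = b"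
        "\<forall>a\<in>prob_measures. \<forall>b\<in>prob_measures. D a b = D b a"
        "\<forall>a\<in>prob_measures. \<forall>b\<in>prob_measures. \<forall>c\<in>prob_measures. D a c \<le> D a b + D b c"
    and C00: "C 0 0 = 0"
    and C_nonneg: "\<forall>a b. a \<ge> 0 \<longrightarrow> b \<ge> 0 \<longrightarrow> C a b \<ge> 0"
    and C_mono1: "\<forall>a a' b. a \<le> a' \<longrightarrow> C a b \<le> C a' b"
    and C_mono2: "\<forall>a b b'. b \<le> b' \<longrightarrow> C a b \<le> C a b'"
    and C_lip: "L_C > 0" "\<forall>a b a' b'. \<bar>C a b - C a' b'\<bar> \<le> L_C * (\<bar>a - a'\<bar> + \<bar>b - b'\<bar>)"
    and TY_lip: "L > 0" "\<forall>ty\<in>TYs. \<forall>x1 y1 x2 y2.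
        norm (ty (x1, y1) - ty (x2, y2)) \<le> L * (norm (x1 - x2) + norm (y1 - y2))"
    and EO_lip: "L' > 0" "p \<ge> 1"
        "\<forall>tx1\<in>TXs. \<forall>ty1\<in>TYs. \<forall>f1\<in>AS. \<forall>tx2\<in>TXs. \<forall>ty2\<in>TYs. \<forall>f2\<in>AS.
           ennreal \<bar>EO (intermediate tx1 ty1 f1) - EO (intermediate tx2 ty2 f2)\<bar>
             \<le> ennreal L' * wasserstein_pow p (distr \<nu>T borel (intermediate tx1 ty1 f1))
                                              (distr \<nu>T borel (intermediate tx2 ty2 f2))"
    and M: "M > 0"
    and \<mu>: "\<mu> \<in> prob_measures"
  shows "\<forall>f\<in>AS. \<forall>\<epsilon>>0. \<exists>\<delta>>0. \<forall>g\<in>AS. d_M M f g < \<delta> \<longrightarrow>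
           \<bar>transfer_risk C EO D \<nu>T TXs TYs \<mu> g - transfer_risk C EO D \<nu>T TXs TYs \<mu> f\<bar> < \<epsilon>"
proof (intro ballI allI impI)
  fix f \<epsilon> assume f: "f \<in> AS" and \<epsilon>: "(\<epsilon>::real) > 0"
  have \<nu>T': "prob_space \<nu>T" "sets \<nu>T = sets borel" using \<nu>T unfolding prob_measures_def by auto
  have Dnn: "D a b \<ge> 0" if "a \<in> prob_measures" "b \<in> prob_measures" for a b
  proof -
    have "D a a \<le> D a b + D b a" using D_metric(3) that by blast
    moreover have "D a a = 0" using D_metric(1) that by blast
    moreover have "D b a = D a b" using D_metric(2) that by blast
    ultimately show ?thesis by linarith
  qed
  have distr_pm: "distr \<nu>T borel tx \<in> prob_measures" if "tx \<in> TXs" for tx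
  proof -
    have "tx \<in> borel_measurable \<nu>T" using TX_meas that measurable_cong_sets[OF \<nu>T'(2) refl] by auto
    then show ?thesis unfolding prob_measures_def
      using prob_space.prob_space_distr[OF \<nu>T'(1)] by auto
  qed
  define F :: "('xs \<Rightarrow> 'ys) \<Rightarrow> ('xt \<Rightarrow> 'xs) \<times> ('xt \<times> 'ys \<Rightarrow> 'yt) \<Rightarrow> real" where "F = (\<lambda>g tt. C (EO (intermediate (fst tt) (snd tt) g)) (D (distr \<nu>T borel (fst tt)) \<mu>))"
  have TR: "transfer_risk C EO D \<nu>T TXs TYs \<mu> g = (INF tt\<in>TXs \<times> TYs. F g tt)" for g
    unfolding transfer_risk_def F_def by simp
  have Fnn: "F g tt \<ge> 0" if "g \<in> AS" "tt \<in> TXs \<times> TYs" for g tt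
  proof -
    have "EO (intermediate (fst tt) (snd tt) g) \<ge> 0"
      using that inter_AT EO_nonneg by auto
    moreover have "D (distr \<nu>T borel (fst tt)) \<mu> \<ge> 0"
      using Dnn distr_pm \<mu> that by auto
    ultimately show ?thesis unfolding F_def using C_nonneg by blast
  qed
  have inter_meas: "intermediate tx ty g \<in> borel_measurable borel"
    if "tx \<in> TXs" "ty \<in> TYs" "g \<in> AS" for tx ty g
  proof -
    have "(\<lambda>x. g (tx x)) \<in> borel_measurable borel"
      using measurable_compose[of tx borel borel g borel] TX_meas AS_meas that by auto
    then have "(\<lambda>x. (x, g (tx x))) \<in> borel_measurable borel"
      by (intro fd_pair_measurable[OF fd(1) fd(3)]) auto
    then have "(\<lambda>x. ty (x, g (tx x))) \<in> borel_measurable borel"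
      using measurable_compose[of "\<lambda>x. (x, g (tx x))" borel borel ty borel] TY_meas that by auto
    then show ?thesis unfolding intermediate_def .
  qed
  have key: "\<bar>F g tt - F f tt\<bar> \<le> L_C * (L' * (L * d) powr p)"
    if g: "g \<in> AS" and tt: "tt \<in> TXs \<times> TYs" and d: "d \<ge> 0" "\<And>x. norm (f x - g x) \<le> d" for g tt d
  proof -
    obtain tx ty where t: "tt = (tx, ty)" "tx \<in> TXs" "ty \<in> TYs" using tt by auto
    let ?h1 = "intermediate tx ty g" and ?h2 = "intermediate tx ty f"
    have hb: "norm (?h1 x - ?h2 x) \<le> L * d" for x
    proof -
      have "norm (?h1 x - ?h2 x) \<le> L * (norm (x - x) + norm (g (tx x) - f (tx x)))"
        using TY_lip(2) t(3) unfolding intermediate_def by blast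
      also have "\<dots> \<le> L * d" using d(2)[of "tx x"] TY_lip(1) by (simp add: norm_minus_commute)
      finally show ?thesis .
    qed
    have W: "wasserstein_pow p (distr \<nu>T borel ?h1) (distr \<nu>T borel ?h2) \<le> ennreal ((L * d) powr p)"
      by (rule W_bound[OF fd(4) \<nu>T'(1) \<nu>T'(2) inter_meas[OF t(2,3) g] inter_meas[OF t(2,3) f] hb])
        (use TY_lip(1) d EO_lip(2) in auto)
    have "ennreal \<bar>EO ?h1 - EO ?h2\<bar> \<le> ennreal L' * wasserstein_pow p (distr \<nu>T borel ?h1) (distr \<nu>T borel ?h2)"
      using EO_lip(3) t g f by blast
    also have "\<dots> \<le> ennreal L' * ennreal ((L * d) powr p)" by (rule mult_left_mono[OF W]) simp
    also have "\<dots> = ennreal (L' * (L * d) powr p)" using EO_lip(1) by (simp add: ennreal_mult)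
    finally have E: "\<bar>EO ?h1 - EO ?h2\<bar> \<le> L' * (L * d) powr p"
      using EO_lip(1) by (subst (asm) ennreal_le_iff) auto
    have "\<bar>F g tt - F f tt\<bar> \<le> L_C * (\<bar>EO ?h1 - EO ?h2\<bar> + \<bar>D (distr \<nu>T borel tx) \<mu> - D (distr \<nu>T borel tx) \<mu>\<bar>)"
      unfolding F_def t(1) using C_lip(2) by (metis fst_conv snd_conv)
    also have "\<dots> \<le> L_C * (L' * (L * d) powr p)" using E C_lip(1) by simp
    finally show ?thesis .
  qed
  define c where "c = \<epsilon> / 2"
  have c: "c > 0" unfolding c_def using \<epsilon> by simp
  define \<delta> where "\<delta> = min M ((c / (L_C * L')) powr (1 / p) / L)"
  have \<delta>: "\<delta> > 0" unfolding \<delta>_def using M c C_lip(1) EO_lip(1) TY_lip(1) by simp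
  show "\<exists>\<delta>>0. \<forall>g\<in>AS. d_M M f g < \<delta> \<longrightarrow>
           \<bar>transfer_risk C EO D \<nu>T TXs TYs \<mu> g - transfer_risk C EO D \<nu>T TXs TYs \<mu> f\<bar> < \<epsilon>"
  proof (intro exI[of _ \<delta>] conjI \<delta> ballI impI)
    fix g assume g: "g \<in> AS" and dg: "d_M M f g < \<delta>"
    define d where "d = d_M M f g"
    have d0: "d \<ge> 0" unfolding d_def d_M_def by simp
    have dn: "norm (f x - g x) \<le> d" for x
      unfolding d_def by (rule dM_bound[OF dg]) (simp add: \<delta>_def)
    have "(L * d) powr p \<le> (L * \<delta>) powr p"
      using d0 dg TY_lip(1) EO_lip(2) unfolding d_def[symmetric]
      by (intro powr_mono2) auto
    also have "\<dots> \<le> ((c / (L_C * L')) powr (1 / p)) powr p"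
    proof (intro powr_mono2)
      show "L * \<delta> \<le> (c / (L_C * L')) powr (1 / p)"
        using TY_lip(1) unfolding \<delta>_def by (simp add: field_simps min_def)
    qed (use EO_lip(2) TY_lip(1) \<delta> in auto)
    also have "\<dots> = c / (L_C * L')"
      using c C_lip(1) EO_lip(1,2) by (simp add: powr_powr)
    finally have "(L * d) powr p \<le> c / (L_C * L')" .
    then have bnd: "L_C * (L' * (L * d) powr p) \<le> c"
      using C_lip(1) EO_lip(1) by (simp add: field_simps)
    have "\<bar>(INF tt\<in>TXs \<times> TYs. F g tt) - (INF tt\<in>TXs \<times> TYs. F f tt)\<bar> \<le> c"
    proof (rule INF_close)
      show "\<forall>t\<in>TXs \<times> TYs. \<bar>F g t - F f t\<bar> \<le> c"
        using key[OF g _ d0 dn] bnd by (meson order_trans)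
    qed (use Fnn g f c in auto)
    then show "\<bar>transfer_risk C EO D \<nu>T TXs TYs \<mu> g - transfer_risk C EO D \<nu>T TXs TYs \<mu> f\<bar> < \<epsilon>"
      unfolding TR c_def using \<epsilon> by simp
  qed
qed

end
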